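(* Let $\tau>0$ and let $f\in C(\mathbb R\times\mathbb R,\mathbb R)$ satisfy: (1) $f$ is asymptotically $\tau$-periodic in time; (2) $f$ is positively regular; (3) for some $u_0\in\mathbb R$ the solution $\varphi(t,u_0,f)$ of $x'=f(t,x)$, $x(0)=u_0$, is bounded on $\mathbb R_+=[0,\infty)$. Then $\varphi(t,u_0,f)$ is $S$-asymptotically $\tau$-periodic, i.e. $\lim_{t\to+\infty}|\varphi(t+\tau,u_0,f)-\varphi(t,u_0,f)|=0$.
   Context: $C(\mathbb R\times\mathbb R,\mathbb R)$ is the space of continuous functions $\mathbb R\times\mathbb R\to\mathbb R$ with the compact-open topology (uniform convergence on compact sets). For $h\in\mathbb R$, $f^h(t,x):=f(t+h,x)$. $H^+(f)$ denotes the closure in $C(\mathbb R\times\mathbb R,\mathbb R)$ of $\{f^h:\ h\ge 0\}$. $f$ is called positively regular if for every $g\in H^+(f)$ and every $v\in\mathbb R$ the equation $y'=g(t,y)$ has a unique solution $\varphi(t,v,g)$ with $\varphi(0,v,g)=v$, and it is defined on all of $\mathbb R_+$. $f$ is called asymptotically $\tau$-periodic in time if $f=P+R$ with $P,R\in C(\mathbb R\times\mathbb R,\mathbb R)$, $P(t+\tau,x)=P(t,x)$ for all $(t,x)$, and $\lim_{t\to+\infty}R(t,x)=0$ uniformly in $x$ on every compact subset of $\mathbb R$. *)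

theory Defs
  imports "HOL-Analysis.Analysis"
begin

definition cont2 :: "(real \<Rightarrow> real \<Rightarrow> real) \<Rightarrow> bool" where
  "cont2 f \<longleftrightarrow> continuous_on UNIV (\<lambda>(t, x). f t x)"

definition tshift :: "(real \<Rightarrow> real \<Rightarrow> real) \<Rightarrow> real \<Rightarrow> (real \<Rightarrow> real \<Rightarrow> real)" where
  "tshift f h = (\<lambda>t x. f (t + h) x)"

text \<open>H^+(f): closure of {f^h : h >= 0} in C(R x R, R) with the compact-open topology,
  i.e. the topology of uniform convergence on compact sets. The basic neighbourhoods of a
  continuous g are {k. sup over K of |k - g| < e} for K compact and e > 0.\<close>
definition Hplus :: "(real \<Rightarrow> real \<Rightarrow> real) \<Rightarrow> (real \<Rightarrow> real \<Rightarrow> real) set" where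
  "Hplus f = {g. cont2 g \<and>
     (\<forall>K :: (real \<times> real) set. \<forall>e>0. compact K \<longrightarrow>
        (\<exists>h\<ge>0. \<forall>(t, x)\<in>K. \<bar>tshift f h t x - g t x\<bar> < e))}"

definition is_sol :: "(real \<Rightarrow> real \<Rightarrow> real) \<Rightarrow> real set \<Rightarrow> (real \<Rightarrow> real) \<Rightarrow> bool" where
  "is_sol g I y \<longleftrightarrow> (\<forall>t\<in>I. (y has_real_derivative g t (y t)) (at t within I))"

definition uniq_global_sol :: "(real \<Rightarrow> real \<Rightarrow> real) \<Rightarrow> real \<Rightarrow> bool" where
  "uniq_global_sol g v \<longleftrightarrow>
     (\<exists>y. is_sol g {0..} y \<and> y 0 = v \<and>
        (\<forall>T>0. \<forall>z. is_sol g {0..T} z \<and> z 0 = v \<longrightarrow> (\<forall>t\<in>{0..T}. z t = y t)))"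

definition positively_regular :: "(real \<Rightarrow> real \<Rightarrow> real) \<Rightarrow> bool" where
  "positively_regular f \<longleftrightarrow> (\<forall>g\<in>Hplus f. \<forall>v. uniq_global_sol g v)"

definition phi :: "real \<Rightarrow> real \<Rightarrow> (real \<Rightarrow> real \<Rightarrow> real) \<Rightarrow> real" where
  "phi t v g = (SOME y. is_sol g {0..} y \<and> y 0 = v) t"

definition asymptotically_periodic :: "real \<Rightarrow> (real \<Rightarrow> real \<Rightarrow> real) \<Rightarrow> bool" where
  "asymptotically_periodic \<tau> f \<longleftrightarrow>
     (\<exists>P R. cont2 P \<and> cont2 R \<and> (\<forall>t x. f t x = P t x + R t x) \<and>
        (\<forall>t x. P (t + \<tau>) x = P t x) \<and>
        (\<forall>K. compact K \<longrightarrow>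
           (\<forall>e>0. \<exists>T. \<forall>t\<ge>T. \<forall>x\<in>K. \<bar>R t x\<bar> < e)))"

end

theory Submission
  imports Defs "HOL-Complex_Analysis.Great_Picard"
begin



lemma sol_cont: "is_sol g S y \<Longrightarrow> continuous_on S y"
  unfolding is_sol_def by (rule DERIV_continuous_on) auto

lemma sol_subset: "is_sol g S y \<Longrightarrow> S' \<subseteq> S \<Longrightarrow> is_sol g S' y"
  unfolding is_sol_def by (meson DERIV_subset subsetD)

lemma phi_props:
  assumes "uniq_global_sol g v"
  shows "is_sol g {0..} (\<lambda>t. phi t v g)" "phi 0 v g = v"
    "\<And>T z t. T > 0 \<Longrightarrow> is_sol g {0..T} z \<Longrightarrow> z 0 = v \<Longrightarrow> t \<in> {0..T} \<Longrightarrow> z t = phi t v g"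
proof -
  obtain y where y: "is_sol g {0..} y" "y 0 = v"
    and u: "\<And>T z. T>0 \<Longrightarrow> is_sol g {0..T} z \<and> z 0 = v \<Longrightarrow> (\<forall>t\<in>{0..T}. z t = y t)"
    using assms unfolding uniq_global_sol_def apply (elim exE conjE) apply (rule that) apply assumption+ apply blast done
  define Y where "Y = (SOME y. is_sol g {0..} y \<and> y 0 = v)"
  have Y: "is_sol g {0..} Y \<and> Y 0 = v"
    unfolding Y_def using y by (intro someI[where P="\<lambda>y. is_sol g {0..} y \<and> y 0 = v" and x=y] conjI)
  have ph: "(\<lambda>t. phi t v g) = Y" unfolding phi_def Y_def by simp
  show "is_sol g {0..} (\<lambda>t. phi t v g)" unfolding ph using Y by simp
  show "phi 0 v g = v" using Y fun_cong[OF ph, of 0] by simp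
  fix T z t assume T: "T > 0" and z: "is_sol g {0..T} z" "z 0 = v" and t: "t \<in> {0..T}"
  have "is_sol g {0..T} Y" by (rule sol_subset[OF conjunct1[OF Y]]) auto
  then have "Y t = y t" using u[OF T] Y t by simp
  moreover have "z t = y t" using u[OF T] z t by simp
  ultimately show "z t = phi t v g" using fun_cong[OF ph, of t] by simp
qed

lemma po_up:
  fixes a :: "nat \<Rightarrow> real" and T :: "real \<Rightarrow> real"
  assumes mono: "mono T" and bd: "\<And>n. \<bar>a n\<bar> \<le> M" and c: "c > 0"
    and err: "\<And>n. n \<ge> N \<Longrightarrow> \<bar>a (Suc n) - T (a n)\<bar> \<le> c/8"
    and hits: "\<And>K. \<exists>n\<ge>K. n \<ge> N \<and> a n + c/2 \<le> T (a n)"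
  shows False
proof -
  have trap: "a n + c/4 \<le> a m" if "n \<ge> N" "a n + c/2 \<le> T (a n)" "m > n" for n m
    using that(3)
  proof (induction m)
    case 0 then show ?case by simp
  next
    case (Suc m)
    show ?case
    proof (cases "m = n")
      case True
      have h: "\<bar>a (Suc n) - T (a n)\<bar> \<le> c/8" using err[of n] that by auto
      have "a (Suc n) - T (a n) \<ge> - (c/8)" using h by (simp only: abs_le_iff) linarith
      then have "a n + c/4 \<le> a (Suc n)" using that(2) c by linarith
      then show ?thesis using True by simp
    next
      case False
      then have "m > n" using Suc by simp
      then have "a n + c/4 \<le> a m" using Suc by simp
      then have "T (a n) \<le> T (a m)" using c by (intro monoD[OF mono]) linarith
      moreover have "\<bar>a (Suc m) - T (a m)\<bar> \<le> c/8" using err[of m] \<open>m > n\<close> that(1) by simp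
      then have "a (Suc m) - T (a m) \<ge> - (c/8)" by (simp only: abs_le_iff) linarith
      ultimately show ?thesis using that(2) c by linarith
    qed
  qed
  have step: "\<exists>n\<ge>N. a n + c/2 \<le> T (a n) \<and> -M + real j * c/4 \<le> a n" for j
  proof (induction j)
    case 0
    obtain n where "n \<ge> N" "a n + c/2 \<le> T (a n)" using hits[of N] by blast
    moreover have "-M \<le> a n" using bd[of n] by (simp add: abs_le_iff)
    ultimately show ?case by (intro exI[of _ n]) simp
  next
    case (Suc j)
    then obtain n where n: "n \<ge> N" "a n + c/2 \<le> T (a n)" "-M + real j * c/4 \<le> a n" by blast
    obtain n' where n': "n' \<ge> Suc n" "n' \<ge> N" "a n' + c/2 \<le> T (a n')" using hits[of "Suc n"] by blast
    have "a n + c/4 \<le> a n'" using trap[OF n(1,2)] n' by simp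
    have "-M + real (Suc j) * c/4 = (-M + real j * c/4) + c/4" by (simp add: algebra_simps)
    then have "-M + real (Suc j) * c/4 \<le> a n'" using n(3) \<open>a n + c/4 \<le> a n'\<close> by linarith
    then show ?case using n' by blast
  qed
  obtain j :: nat where j: "(2*M+1) / (c/4) < real j" using reals_Archimedean2 by blast
  then have "2*M+1 < real j * (c/4)" using c by (simp add: field_simps)
  moreover obtain n where "-M + real j * c/4 \<le> a n" using step by blast
  moreover have "a n \<le> M" using bd[of n] by (simp add: abs_le_iff)
  moreover have "real j * c/4 = real j * (c/4)" by simp
  ultimately show False using c by linarith
qed

lemma po:
  fixes a :: "nat \<Rightarrow> real" and T :: "real \<Rightarrow> real"
  assumes mono: "mono T" and bd: "\<And>n. \<bar>a n\<bar> \<le> M"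
    and lim: "(\<lambda>n. a (Suc n) - T (a n)) \<longlonglongrightarrow> 0"
  shows "(\<lambda>n. a (Suc n) - a n) \<longlonglongrightarrow> 0"
proof (rule ccontr)
  assume "\<not> ?thesis"
  then obtain c where c: "c > 0" and big: "\<And>K. \<exists>n\<ge>K. c \<le> \<bar>a (Suc n) - a n\<bar>"
    unfolding LIMSEQ_iff by (auto simp: not_less)
  obtain N where N: "\<And>n. n \<ge> N \<Longrightarrow> \<bar>a (Suc n) - T (a n)\<bar> < c/8"
    using lim c unfolding LIMSEQ_iff by (metis diff_zero divide_pos_pos real_norm_def zero_less_numeral)
  have err: "\<And>n. n \<ge> N \<Longrightarrow> \<bar>a (Suc n) - T (a n)\<bar> \<le> c/8" using N less_imp_le by blast
  have ud: "a n + c/2 \<le> T (a n) \<or> T (a n) \<le> a n - c/2" if "n \<ge> N" "c \<le> \<bar>a (Suc n) - a n\<bar>" for n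
  proof -
    have h: "\<bar>a (Suc n) - T (a n)\<bar> < c/8" using N[OF that(1)] .
    have "a (Suc n) - T (a n) < c/8 \<and> - (a (Suc n) - T (a n)) < c/8" using h by (simp only: abs_less_iff)
    moreover have "c \<le> a (Suc n) - a n \<or> c \<le> a n - a (Suc n)" using that(2) by (auto simp: abs_le_iff)
    ultimately show ?thesis by (elim disjE conjE) linarith+
  qed
  show False
  proof (cases "\<forall>K. \<exists>n\<ge>K. n \<ge> N \<and> a n + c/2 \<le> T (a n)")
    case True
    then show False using po_up[of T a M c N, OF mono bd c err] by blast
  next
    case False
    then obtain K where K: "\<And>n. n \<ge> K \<Longrightarrow> n \<ge> N \<Longrightarrow> \<not> (a n + c/2 \<le> T (a n))" by blast
    have hits: "\<exists>n\<ge>K'. n \<ge> N \<and> (-a n) + c/2 \<le> - T (- (- a n))" for K'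
    proof -
      obtain n where "n \<ge> max K' (max K N)" "c \<le> \<bar>a (Suc n) - a n\<bar>" using big by blast
      then show ?thesis using ud[of n] K[of n] by (intro exI[of _ n]) auto
    qed
    have m: "mono (\<lambda>x. - T (- x))" using mono by (auto simp: mono_def)
    show False
    proof (rule po_up[OF m, of "\<lambda>n. - a n" M c N])
      show "\<bar>- a n\<bar> \<le> M" for n using bd[of n] by simp
      show "c > 0" by fact
      show "\<bar>- a (Suc n) - - T (- (- a n))\<bar> \<le> c / 8" if "N \<le> n" for n
        using err[OF that] by (simp add: abs_minus_commute)
      show "\<exists>n\<ge>K. N \<le> n \<and> - a n + c / 2 \<le> - T (- (- a n))" for K using hits[of K] by simp
    qed
  qed
qed


lemma mono_sol:
  assumes U: "\<And>v. uniq_global_sol g v" and vw: "v \<le> w" and t: "t \<ge> 0"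
  shows "phi t v g \<le> phi t w g"
proof (rule ccontr)
  assume "\<not> ?thesis"
  then have lt: "phi t w g < phi t v g" by simp
  have sv: "is_sol g {0..} (\<lambda>s. phi s v g)" and sw: "is_sol g {0..} (\<lambda>s. phi s w g)"
    using phi_props(1)[OF U] by blast+
  have v0: "phi 0 v g = v" and w0: "phi 0 w g = w" using phi_props(2)[OF U] by blast+
  have tpos: "t > 0"
  proof (rule ccontr)
    assume "\<not> t > 0" then have "t = 0" using t by simp
    then show False using lt v0 w0 vw by simp
  qed
  define f where "f s = phi s v g - phi s w g" for s
  have fc: "continuous_on {0..t} f" unfolding f_def
    by (intro continuous_on_diff sol_cont[OF sol_subset[OF sv]] sol_cont[OF sol_subset[OF sw]]) auto
  obtain t0 where t0: "0 \<le> t0" "t0 \<le> t" "f t0 = 0"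
    using IVT'[of f 0 0 t, OF _ _ _ fc] v0 w0 vw lt tpos unfolding f_def by auto
  have t0t: "t0 < t" using t0 lt unfolding f_def by (cases "t0 = t") auto
  have eq0: "phi t0 v g = phi t0 w g" using t0(3) unfolding f_def by simp
  define z where "z s = (if s \<in> {0..t0} then phi s v g else phi s w g)" for s
  have zsol: "is_sol g {0..t} z" unfolding is_sol_def
  proof
    fix s assume s: "s \<in> {0..t}"
    have cl1: "closure {0..t0} = {0..t0}" by simp
    have cl2: "closure {t0<..t} = {t0..t}" using t0t by simp
    have int: "closure {0..t0} \<inter> closure {t0<..t} = {t0}" using cl1 cl2 t0 t0t by auto
    have "((\<lambda>x. if x \<in> {0..t0} then phi x v g else phi x w g) has_vector_derivative
          (if s \<in> {0..t0} then g s (phi s v g) else g s (phi s w g))) (at s within {0..t})"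
    proof (rule has_vector_derivative_If_within_closures[where T="{t0<..t}"])
      show "s \<in> {0..t0} \<union> {t0<..t}" using s by auto
      show "{0..t} = {0..t0} \<union> {t0<..t}" using t0 by auto
      show "((\<lambda>s. phi s v g) has_vector_derivative g s (phi s v g))
          (at s within {0..t0} \<union> closure {0..t0} \<inter> closure {t0<..t})"
        if "s \<in> {0..t0} \<union> closure {0..t0} \<inter> closure {t0<..t}"
      proof -
        have e: "{0..t0} \<union> closure {0..t0} \<inter> closure {t0<..t} = {0..t0}" using int t0 by auto
        have "s \<in> {0..}" using that e by auto
        then have "((\<lambda>s. phi s v g) has_real_derivative g s (phi s v g)) (at s within {0..})"
          using sv unfolding is_sol_def by blast
        then have "((\<lambda>s. phi s v g) has_real_derivative g s (phi s v g)) (at s within {0..t0})"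
          by (rule DERIV_subset) auto
        then show ?thesis unfolding e by (simp add: has_real_derivative_iff_has_vector_derivative)
      qed
      show "((\<lambda>s. phi s w g) has_vector_derivative g s (phi s w g))
          (at s within {t0<..t} \<union> closure {0..t0} \<inter> closure {t0<..t})"
        if "s \<in> {t0<..t} \<union> closure {0..t0} \<inter> closure {t0<..t}"
      proof -
        have e: "{t0<..t} \<union> closure {0..t0} \<inter> closure {t0<..t} = {t0..t}" using int t0t by auto
        have "s \<in> {0..}" using that e t0 by auto
        then have "((\<lambda>s. phi s w g) has_real_derivative g s (phi s w g)) (at s within {0..})"
          using sw unfolding is_sol_def by blast
        then have "((\<lambda>s. phi s w g) has_real_derivative g s (phi s w g)) (at s within {t0..t})"
          by (rule DERIV_subset) (use t0 in auto)
        then show ?thesis unfolding e by (simp add: has_real_derivative_iff_has_vector_derivative)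
      qed
      show "phi s v g = phi s w g" if "s \<in> closure {0..t0}" "s \<in> closure {t0<..t}"
        using that int eq0 by auto
      show "g s (phi s v g) = g s (phi s w g)" if "s \<in> closure {0..t0}" "s \<in> closure {t0<..t}"
      proof -
        have "s \<in> closure {0..t0} \<inter> closure {t0<..t}" using that by (rule IntI)
        then have "s = t0" unfolding int by simp
        then show ?thesis using eq0 by simp
      qed
    qed
    moreover have "(if s \<in> {0..t0} then g s (phi s v g) else g s (phi s w g)) = g s (z s)"
      unfolding z_def by simp
    ultimately show "(z has_real_derivative g s (z s)) (at s within {0..t})"
      unfolding z_def[abs_def] by (simp add: has_real_derivative_iff_has_vector_derivative)
  qed
  have "z 0 = v" unfolding z_def using t0 v0 by simp
  then have "z t = phi t v g" by (rule phi_props(3)[OF U tpos zsol]) (use tpos in simp)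
  moreover have "z t = phi t w g" unfolding z_def using t0t by simp
  ultimately show False using lt by simp
qed



lemma cont2_on: "cont2 g \<Longrightarrow> continuous_on S (\<lambda>(t, x). g t x)"
  unfolding cont2_def using continuous_on_subset by blast

lemma cont2_comp:
  assumes "cont2 g" "continuous_on S z"
  shows "continuous_on S (\<lambda>s. g s (z s))"
proof -
  have "continuous_on S (\<lambda>s. (s, z s))" by (intro continuous_on_Pair continuous_on_id assms(2))
  from continuous_on_compose2[OF cont2_on[OF assms(1), of UNIV] this]
  show ?thesis by simp
qed

lemma zero_by_eps:
  fixes x K :: real
  assumes "K > 0" "\<And>e. e > 0 \<Longrightarrow> \<bar>x\<bar> < e * K"
  shows "x = 0"
proof (rule ccontr)
  assume "x \<noteq> 0"
  then have "\<bar>x\<bar> < (\<bar>x\<bar> / K) * K" using assms by (intro assms(2)) simp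
  then show False using assms(1) by simp
qed

lemma lip_sol:
  assumes "is_sol g {0..T} y" "\<And>t. t \<in> {0..T} \<Longrightarrow> \<bar>g t (y t)\<bar> \<le> C"
    "s \<in> {0..T}" "t \<in> {0..T}"
  shows "\<bar>y s - y t\<bar> \<le> C * \<bar>s - t\<bar>"
proof -
  have "norm (y s - y t) \<le> C * norm (s - t)"
    by (rule field_differentiable_bound[where f'="\<lambda>t. g t (y t)" and S="{0..T}"])
      (use assms in \<open>auto simp: is_sol_def\<close>)
  then show ?thesis by simp
qed

lemma CD0:
  fixes g :: "real \<Rightarrow> real \<Rightarrow> real" and gk :: "nat \<Rightarrow> real \<Rightarrow> real \<Rightarrow> real"
    and yk :: "nat \<Rightarrow> real \<Rightarrow> real" and psi :: "real \<Rightarrow> real"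
  assumes T: "T > 0" and gc: "cont2 g"
    and conv: "\<And>e. e > 0 \<Longrightarrow> \<exists>N. \<forall>k\<ge>N. \<forall>t\<in>{0..T}. \<forall>x\<in>{-B..B}. \<bar>gk k t x - g t x\<bar> < e"
    and sol: "\<And>k. is_sol (gk k) {0..T} (yk k)"
    and bd: "\<And>k t. t \<in> {0..T} \<Longrightarrow> \<bar>yk k t\<bar> \<le> B"
    and init: "(\<lambda>k. yk k 0) \<longlonglongrightarrow> v"
    and uniq: "\<And>z. is_sol g {0..T} z \<Longrightarrow> z 0 = v \<Longrightarrow> \<forall>t\<in>{0..T}. z t = psi t"
    and e: "e > 0"
  shows "\<exists>N. \<forall>k\<ge>N. \<forall>t\<in>{0..T}. \<bar>yk k t - psi t\<bar> < e"
proof (rule ccontr)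
  assume nc: "\<not> ?thesis"
  have "\<not> eventually (\<lambda>k. \<forall>t\<in>{0..T}. \<bar>yk k t - psi t\<bar> < e) sequentially"
    using nc unfolding eventually_sequentially by blast
  from not_eventually_sequentiallyD[OF this] obtain r :: "nat \<Rightarrow> nat" where r: "strict_mono r"
    and bad0: "\<forall>n. \<not> (\<forall>t\<in>{0..T}. \<bar>yk (r n) t - psi t\<bar> < e)" by blast
  have bad: "\<exists>t\<in>{0..T}. e \<le> \<bar>yk (r n) t - psi t\<bar>" for n using bad0 by (simp add: not_less)
  define Q where "Q = {0..T} \<times> {-B..B}"
  have Qc: "compact Q" unfolding Q_def by (intro compact_Times compact_Icc)
  have "bounded ((\<lambda>(t, x). g t x) ` Q)"
    by (intro compact_imp_bounded compact_continuous_image cont2_on gc Qc)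
  then obtain C0 where C0: "\<And>p. p \<in> Q \<Longrightarrow> norm ((\<lambda>(t, x). g t x) p) \<le> C0"
    unfolding bounded_iff by blast
  define C where "C = \<bar>C0\<bar> + 1"
  have Cpos: "C > 0" unfolding C_def by simp
  have gC: "\<bar>g t x\<bar> \<le> \<bar>C0\<bar>" if "t \<in> {0..T}" "x \<in> {-B..B}" for t x
    using C0[of "(t, x)"] that unfolding Q_def by auto
  obtain N1 where N1: "\<And>k t x. k \<ge> N1 \<Longrightarrow> t \<in> {0..T} \<Longrightarrow> x \<in> {-B..B} \<Longrightarrow> \<bar>gk k t x - g t x\<bar> < 1"
    using conv[OF zero_less_one] by blast
  have ybd: "yk k t \<in> {-B..B}" if "t \<in> {0..T}" for k t using bd[OF that, of k] by (auto simp: abs_le_iff)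
  have lip: "\<bar>yk k s - yk k t\<bar> \<le> C * \<bar>s - t\<bar>" if "k \<ge> N1" "s \<in> {0..T}" "t \<in> {0..T}" for k s t
  proof (rule lip_sol[OF sol _ that(2,3)])
    fix u assume u: "u \<in> {0..T}"
    have "\<bar>gk k u (yk k u) - g u (yk k u)\<bar> < 1" using N1[OF that(1) u ybd[OF u]] .
    moreover have "\<bar>g u (yk k u)\<bar> \<le> \<bar>C0\<bar>" using gC[OF u ybd[OF u]] .
    ultimately show "\<bar>gk k u (yk k u)\<bar> \<le> C" unfolding C_def by linarith
  qed
  define F where "F n = yk (r (n + N1))" for n
  have rge: "r n \<ge> n" for n using r by (simp add: seq_suble)
  obtain z kk where zc: "continuous_on {0..T} z" and kk: "strict_mono (kk :: nat \<Rightarrow> nat)"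
    and uc: "\<And>e. 0 < e \<Longrightarrow> \<exists>N. \<forall>n x. N \<le> n \<and> x \<in> {0..T} \<longrightarrow> norm (F (kk n) x - z x) < e"
  proof (rule Arzela_Ascoli[of "{0..T}" F B])
    show "compact {0..T::real}" by simp
    show "norm (F n x) \<le> B" if "x \<in> {0..T}" for n x using bd[OF that] unfolding F_def by simp
    show "\<exists>d>0. \<forall>n y. y \<in> {0..T} \<and> norm (x - y) < d \<longrightarrow> norm (F n x - F n y) < e'"
      if "x \<in> {0..T}" "0 < e'" for x e'
    proof (intro exI[of _ "e' / C"] conjI allI impI)
      show "e' / C > 0" using that Cpos by simp
      fix n y assume y: "y \<in> {0..T} \<and> norm (x - y) < e' / C"
      have "r (n + N1) \<ge> N1" using rge[of "n + N1"] by simp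
      then have "\<bar>F n x - F n y\<bar> \<le> C * \<bar>x - y\<bar>" unfolding F_def using lip that y by blast
      also have "\<dots> < C * (e' / C)" using y Cpos by (intro mult_strict_left_mono) auto
      also have "\<dots> = e'" using Cpos by simp
      finally show "norm (F n x - F n y) < e'" by simp
    qed
  qed blast
  define m where "m n = r (kk n + N1)" for n
  have Fm: "F (kk n) = yk (m n)" for n unfolding F_def m_def by simp
  have mge: "m n \<ge> n" for n
  proof -
    have "kk n \<ge> n" using kk by (simp add: seq_suble)
    then show ?thesis unfolding m_def using rge[of "kk n + N1"] by simp
  qed
  have msm: "strict_mono m" unfolding m_def strict_mono_def
    using kk r by (simp add: strict_mono_less)
  have initm: "(\<lambda>n. yk (m n) 0) \<longlonglongrightarrow> v"
    using LIMSEQ_subseq_LIMSEQ[OF init msm] by (simp add: o_def)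
  have uc': "\<exists>N. \<forall>n\<ge>N. \<forall>x\<in>{0..T}. \<bar>yk (m n) x - z x\<bar> < e'" if "e' > 0" for e'
    using uc[OF that] unfolding Fm by (simp add: Ball_def) blast
  have z0: "z 0 = v"
  proof -
    have "(\<lambda>n. yk (m n) 0) \<longlonglongrightarrow> z 0"
    proof (rule LIMSEQ_I)
      fix e' :: real assume "e' > 0"
      then obtain N where "\<forall>n\<ge>N. \<forall>x\<in>{0..T}. \<bar>yk (m n) x - z x\<bar> < e'" using uc' by blast
      moreover have "(0::real) \<in> {0..T}" using T by simp
      ultimately have "\<forall>n\<ge>N. \<bar>yk (m n) 0 - z 0\<bar> < e'" by blast
      then show "\<exists>N. \<forall>n\<ge>N. norm (yk (m n) 0 - z 0) < e'" by auto
    qed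
    then show ?thesis using initm LIMSEQ_unique by blast
  qed
  have zbd: "z t \<in> {-B..B}" if t: "t \<in> {0..T}" for t
  proof -
    have "\<bar>z t\<bar> \<le> B"
    proof (rule field_le_epsilon)
      fix e' :: real assume "e' > 0"
      then obtain N where "\<forall>n\<ge>N. \<forall>x\<in>{0..T}. \<bar>yk (m n) x - z x\<bar> < e'" using uc' by blast
      then have "\<bar>yk (m N) t - z t\<bar> < e'" using t by blast
      moreover have "\<bar>yk (m N) t\<bar> \<le> B" using bd[OF t] .
      ultimately show "\<bar>z t\<bar> \<le> B + e'" by linarith
    qed
    then show ?thesis by (auto simp: abs_le_iff)
  qed
  define G where "G s = g s (z s)" for s
  have Gc: "continuous_on {0..T} G" unfolding G_def by (rule cont2_comp[OF gc zc])
  have ucg: "uniformly_continuous_on Q (\<lambda>(t, x). g t x)"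
    by (intro compact_uniformly_continuous cont2_on gc Qc)
  have inteq: "z t = v + integral {0..t} G" if t: "t \<in> {0..T}" for t
  proof -
    have t0: "0 \<le> t" "t \<le> T" using t by auto
    have sub: "{0..t} \<subseteq> {0..T}" using t by auto
    have GI: "(G has_integral integral {0..t} G) {0..t}"
      using integrable_continuous_real[OF continuous_on_subset[OF Gc sub]] by (simp add: has_integral_integral)
    have FI: "((\<lambda>s. gk (m n) s (yk (m n) s)) has_integral (yk (m n) t - yk (m n) 0)) {0..t}" for n
    proof (rule fundamental_theorem_of_calculus[OF t0(1)])
      fix s assume s: "s \<in> {0..t}"
      have "(yk (m n) has_real_derivative gk (m n) s (yk (m n) s)) (at s within {0..T})"
        using sol[of "m n"] s sub unfolding is_sol_def by blast
      then have "(yk (m n) has_real_derivative gk (m n) s (yk (m n) s)) (at s within {0..t})"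
        using DERIV_subset sub by blast
      then show "(yk (m n) has_vector_derivative gk (m n) s (yk (m n) s)) (at s within {0..t})"
        by (simp add: has_real_derivative_iff_has_vector_derivative)
    qed
    define K where "K = 2 + 2 * T"
    have Kpos: "K > 0" unfolding K_def using T by simp
    have "z t - v - integral {0..t} G = 0"
    proof (rule zero_by_eps[OF Kpos])
      fix \<epsilon> :: real assume ep: "\<epsilon> > 0"
      obtain d where d: "d > 0" and dd: "\<And>p p'. p \<in> Q \<Longrightarrow> p' \<in> Q \<Longrightarrow> dist p' p < d \<Longrightarrow>
          dist ((\<lambda>(t, x). g t x) p') ((\<lambda>(t, x). g t x) p) < \<epsilon>"
        using ucg ep unfolding uniformly_continuous_on_def by metis
      obtain N2 where N2: "\<forall>n\<ge>N2. \<forall>x\<in>{0..T}. \<bar>yk (m n) x - z x\<bar> < min d \<epsilon>"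
        using uc'[of "min d \<epsilon>"] d ep by auto
      obtain N3 where N3: "\<forall>k\<ge>N3. \<forall>t\<in>{0..T}. \<forall>x\<in>{-B..B}. \<bar>gk k t x - g t x\<bar> < \<epsilon>"
        using conv[OF ep] by blast
      define n where "n = max N2 N3"
      have mn: "m n \<ge> N3" using mge[of n] unfolding n_def by simp
      have close: "\<bar>yk (m n) x - z x\<bar> < min d \<epsilon>" if "x \<in> {0..T}" for x
        using N2 that unfolding n_def by auto
      have pt: "\<bar>gk (m n) s (yk (m n) s) - G s\<bar> \<le> 2 * \<epsilon>" if s: "s \<in> {0..t}" for s
      proof -
        have sT: "s \<in> {0..T}" using s sub by blast
        have a1: "\<bar>gk (m n) s (yk (m n) s) - g s (yk (m n) s)\<bar> < \<epsilon>"
          using N3 mn sT ybd[OF sT] by blast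
        have "dist (s, yk (m n) s) (s, z s) < d"
          using close[OF sT] by (simp add: dist_Pair_Pair dist_real_def)
        then have "dist (g s (yk (m n) s)) (g s (z s)) < \<epsilon>"
          using dd[of "(s, z s)" "(s, yk (m n) s)"] sT ybd[OF sT] zbd[OF sT] unfolding Q_def by auto
        then have a2: "\<bar>g s (yk (m n) s) - G s\<bar> < \<epsilon>" unfolding G_def dist_real_def .
        show ?thesis using a1 a2 by linarith
      qed
      have "norm ((yk (m n) t - yk (m n) 0) - integral {0..t} G) \<le> (2 * \<epsilon>) * Henstock_Kurzweil_Integration.content {0..t}"
        by (rule has_integral_bound_real[where S="{}", OF _ _ has_integral_diff[OF FI GI]]) (use ep pt in auto)
      also have "\<dots> \<le> (2 * \<epsilon>) * T" using t0 ep by (simp add: content_real)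
      finally have i1: "\<bar>(yk (m n) t - yk (m n) 0) - integral {0..t} G\<bar> \<le> 2 * \<epsilon> * T" by simp
      have i2: "\<bar>yk (m n) t - z t\<bar> < \<epsilon>" using close[OF t] by simp
      have i3: "\<bar>yk (m n) 0 - z 0\<bar> < \<epsilon>" using close[of 0] T by simp
      have "\<bar>z t - v - integral {0..t} G\<bar> < 2 * \<epsilon> + 2 * \<epsilon> * T"
        using i1 i2 i3 z0 by linarith
      then show "\<bar>z t - v - integral {0..t} G\<bar> < \<epsilon> * K" unfolding K_def by (simp add: algebra_simps)
    qed
    then show ?thesis by simp
  qed
  have zsol: "is_sol g {0..T} z"
    unfolding is_sol_def
  proof
    fix t assume t: "t \<in> {0..T}"
    have "((\<lambda>u. integral {0..u} G) has_vector_derivative G t) (at t within {0..T})"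
      by (rule integral_has_vector_derivative[OF Gc t])
    then have "((\<lambda>u. integral {0..u} G) has_real_derivative G t) (at t within {0..T})"
      by (simp add: has_real_derivative_iff_has_vector_derivative)
    then have dI: "((\<lambda>u. integral {0..u} G) has_real_derivative G t) (at t within {0..T})" .
    have "((\<lambda>u. v + integral {0..u} G) has_real_derivative G t) (at t within {0..T})"
      using DERIV_add[OF DERIV_const[of v] dI] by simp
    then show "(z has_real_derivative g t (z t)) (at t within {0..T})"
      unfolding G_def[symmetric]
      by (rule has_field_derivative_transform_within[where d=1]) (use t inteq in auto)
  qed
  have zpsi: "\<forall>t\<in>{0..T}. z t = psi t" using uniq[OF zsol z0] .
  obtain N4 where "\<forall>n\<ge>N4. \<forall>x\<in>{0..T}. \<bar>yk (m n) x - z x\<bar> < e" using uc'[OF e] by blast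
  moreover obtain t where "t \<in> {0..T}" "e \<le> \<bar>yk (r (kk N4 + N1)) t - psi t\<bar>" using bad by blast
  ultimately show False using zpsi unfolding m_def by force
qed




lemma grow:
  fixes a c :: real and g :: "nat \<Rightarrow> real"
  assumes "a > 0" "\<And>k. real k * a - c \<le> g k"
  shows "\<exists>K. \<forall>k\<ge>K. X \<le> g k"
proof -
  obtain K :: nat where K: "(X + c) / a \<le> real K" using real_arch_simple by blast
  then have K': "X + c \<le> real K * a" using assms(1) by (simp add: field_simps)
  show ?thesis
  proof (intro exI[of _ K] allI impI)
    fix k assume "K \<le> k"
    then have "real K * a \<le> real k * a" using assms(1) by (intro mult_right_mono) auto
    then show "X \<le> g k" using K' assms(2)[of k] by linarith
  qed
qed

lemma not_tendsto_subseq: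
  fixes X :: "nat \<Rightarrow> real"
  assumes "\<not> X \<longlonglongrightarrow> 0"
  obtains \<epsilon> and r :: "nat \<Rightarrow> nat" where "\<epsilon> > 0" "strict_mono r" "\<And>k. \<epsilon> \<le> \<bar>X (r k)\<bar>"
proof -
  obtain \<epsilon> where e: "\<epsilon> > 0" and ne: "\<not> (\<exists>no. \<forall>n\<ge>no. norm (X n - 0) < \<epsilon>)"
    using assms unfolding LIMSEQ_iff by blast
  have "\<not> eventually (\<lambda>n. \<bar>X n\<bar> < \<epsilon>) sequentially"
    using ne unfolding eventually_sequentially by simp
  from not_eventually_sequentiallyD[OF this] obtain r :: "nat \<Rightarrow> nat"
    where "strict_mono r" "\<forall>n. \<not> \<bar>X (r n)\<bar> < \<epsilon>" by blast
  then have r1: "strict_mono r" and r2: "\<And>k. \<epsilon> \<le> \<bar>X (r k)\<bar>" by (auto simp: not_less)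
  show ?thesis by (rule that[OF e r1 r2])
qed

lemma bw:
  fixes a :: "nat \<Rightarrow> real"
  assumes "\<And>n. \<bar>a n\<bar> \<le> M"
  obtains l r where "l \<in> {-M..M}" "strict_mono r" "(a \<circ> r) \<longlonglongrightarrow> l"
proof -
  have "seq_compact {-M..M}" by (intro compact_imp_seq_compact compact_Icc)
  moreover have "\<forall>n. a n \<in> {-M..M}"
  proof
    fix n show "a n \<in> {-M..M}" using assms[of n] by (simp add: abs_le_iff)
  qed
  ultimately show ?thesis using that unfolding seq_compact_def by blast
qed



theorem theorem1p2:
  fixes \<tau> :: real and f :: "real \<Rightarrow> real \<Rightarrow> real" and u0 :: real
  assumes "\<tau> > 0"
    and "cont2 f"
    and "asymptotically_periodic \<tau> f"
    and "positively_regular f"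
    and "bounded ((\<lambda>t. phi t u0 f) ` {0..})"
  shows "((\<lambda>t. \<bar>phi (t + \<tau>) u0 f - phi t u0 f\<bar>) \<longlongrightarrow> 0) at_top"
proof -
  note tau = assms(1)
  obtain P R where cP: "cont2 P" and cR: "cont2 R" and fPR: "\<And>t x. f t x = P t x + R t x"
    and per: "\<And>t x. P (t + \<tau>) x = P t x"
    and Rlim: "\<And>K. compact K \<Longrightarrow> (\<forall>e>0. \<exists>T. \<forall>t\<ge>T. \<forall>x\<in>K. \<bar>R t x\<bar> < e)"
    using assms(3) unfolding asymptotically_periodic_def by blast
  have perN: "P (t + real n * \<tau>) x = P t x" for n t x
  proof (induction n arbitrary: t)
    case 0 then show ?case by simp
  next
    case (Suc n)
    have "t + real (Suc n) * \<tau> = (t + real n * \<tau>) + \<tau>" by (simp add: algebra_simps)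
    then have "P (t + real (Suc n) * \<tau>) x = P ((t + real n * \<tau>) + \<tau>) x" by (simp only:)
    also have "\<dots> = P (t + real n * \<tau>) x" by (rule per)
    also have "\<dots> = P t x" by (rule Suc)
    finally show ?case .
  qed
  have Rsmall: "\<exists>T0. \<forall>t\<ge>T0. \<forall>x\<in>{-B..B}. \<bar>R t x\<bar> < e" if "e > 0" for B e
    using Rlim[OF compact_Icc[of "-B" B]] that by blast
  have fshift: "f (t + real n * \<tau>) x - P t x = R (t + real n * \<tau>) x" for t x n
    using fPR[of "t + real n * \<tau>" x] perN[of t n x] by simp
  have PH: "P \<in> Hplus f"
    unfolding Hplus_def tshift_def
  proof (intro CollectI conjI cP allI impI)
    fix K :: "(real \<times> real) set" and e :: real assume K: "compact K" and e: "0 < e"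
    obtain r where r: "\<And>p. p \<in> K \<Longrightarrow> norm p \<le> r" using compact_imp_bounded[OF K] unfolding bounded_iff by blast
    obtain T0 where T0: "\<forall>t\<ge>T0. \<forall>x\<in>{-r..r}. \<bar>R t x\<bar> < e" using Rsmall[OF e] by blast
    obtain n :: nat where n: "(\<bar>T0\<bar> + \<bar>r\<bar>) / \<tau> \<le> real n" using real_arch_simple by blast
    then have n': "\<bar>T0\<bar> + \<bar>r\<bar> \<le> real n * \<tau>" using tau by (simp add: field_simps)
    show "\<exists>h\<ge>0. \<forall>(t, x)\<in>K. \<bar>f (t + h) x - P t x\<bar> < e"
    proof (intro exI[of _ "real n * \<tau>"] conjI ballI)
      show "0 \<le> real n * \<tau>" using tau by simp
      fix p assume p: "p \<in> K"
      obtain t x where pt: "p = (t, x)" by (cases p)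
      have "\<bar>t\<bar> \<le> r" "\<bar>x\<bar> \<le> r" using r[OF p] norm_fst_le[of t x] norm_snd_le[of x t] pt by auto
      then have "t + real n * \<tau> \<ge> T0" "x \<in> {-r..r}" using n' by (auto simp: abs_le_iff)
      then have "\<bar>R (t + real n * \<tau>) x\<bar> < e" using T0 by blast
      then show "case p of (t, x) \<Rightarrow> \<bar>f (t + real n * \<tau>) x - P t x\<bar> < e"
        unfolding pt using fshift[of t n x] by simp
    qed
  qed
  have FH: "f \<in> Hplus f"
    unfolding Hplus_def tshift_def using assms(2) by (auto intro!: exI[of _ 0])
  have UP: "\<And>v. uniq_global_sol P v" using assms(4) PH unfolding positively_regular_def by blast
  have Uf: "uniq_global_sol f u0" using assms(4) FH unfolding positively_regular_def by blast
  define \<phi> where "\<phi> t = phi t u0 f" for t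
  have solf: "is_sol f {0..} \<phi>" unfolding \<phi>_def using phi_props(1)[OF Uf] .
  obtain M0 where M0: "\<And>t. t \<in> {0..} \<Longrightarrow> \<bar>\<phi> t\<bar> \<le> M0"
    using assms(5) unfolding bounded_iff \<phi>_def by auto
  define M where "M = \<bar>M0\<bar>"
  have phiM: "\<bar>\<phi> t\<bar> \<le> M" if "t \<ge> 0" for t using M0[of t] that unfolding M_def by auto
  have solP: "is_sol P {0..\<tau>} (\<lambda>t. phi t v P)" for v
    using sol_subset[OF phi_props(1)[OF UP]] by auto
  have uniqP: "\<forall>t\<in>{0..\<tau>}. z t = phi t v P" if "is_sol P {0..\<tau>} z" "z 0 = v" for z v
    using phi_props(3)[OF UP tau that] by blast
  define TT where "TT v = phi \<tau> v P" for v
  have monoTT: "mono TT" unfolding TT_def mono_def using mono_sol[OF UP] tau by simp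
  have "bounded ((\<lambda>t. phi t (-M) P) ` {0..\<tau>})"
    by (intro compact_imp_bounded compact_continuous_image sol_cont[OF solP] compact_Icc)
  then obtain B1 where B10: "\<forall>y\<in>(\<lambda>t. phi t (-M) P) ` {0..\<tau>}. norm y \<le> B1" unfolding bounded_iff by blast
  have B1: "\<bar>phi t (-M) P\<bar> \<le> B1" if "t \<in> {0..\<tau>}" for t using B10 that by force
  have "bounded ((\<lambda>t. phi t M P) ` {0..\<tau>})"
    by (intro compact_imp_bounded compact_continuous_image sol_cont[OF solP] compact_Icc)
  then obtain B2 where B20: "\<forall>y\<in>(\<lambda>t. phi t M P) ` {0..\<tau>}. norm y \<le> B2" unfolding bounded_iff by blast
  have B2: "\<bar>phi t M P\<bar> \<le> B2" if "t \<in> {0..\<tau>}" for t using B20 that by force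
  define B where "B = max M (max B1 B2)"
  have MB: "M \<le> B" unfolding B_def by simp
  have PsiBd: "\<bar>phi t v P\<bar> \<le> B" if "v \<in> {-M..M}" "t \<in> {0..\<tau>}" for v t
  proof -
    have "phi t (-M) P \<le> phi t v P" using mono_sol[OF UP, of "-M" v t] that by auto
    moreover have "phi t v P \<le> phi t M P" using mono_sol[OF UP, of v M t] that by auto
    ultimately show ?thesis using B1[OF that(2)] B2[OF that(2)] unfolding B_def by (auto simp: abs_le_iff)
  qed
  have phiB: "\<bar>\<phi> t\<bar> \<le> B" if "t \<ge> 0" for t using phiM[OF that] MB by simp
  have A: "(\<lambda>k. TT (w k)) \<longlonglongrightarrow> TT v" if w: "\<And>k. w k \<in> {-M..M}" and wv: "w \<longlonglongrightarrow> v" for w v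
  proof (rule LIMSEQ_I)
    fix e :: real assume e: "e > 0"
    have "\<exists>N. \<forall>k\<ge>N. \<forall>t\<in>{0..\<tau>}. \<bar>phi t (w k) P - phi t v P\<bar> < e"
    proof (rule CD0[where gk="\<lambda>k. P" and g=P and yk="\<lambda>k t. phi t (w k) P" and B=B and T=\<tau> and v=v])
      show "\<tau> > 0" by (rule tau)
      show "cont2 P" by (rule cP)
      show "\<exists>N. \<forall>k\<ge>N. \<forall>t\<in>{0..\<tau>}. \<forall>x\<in>{-B..B}. \<bar>P t x - P t x\<bar> < e'" if "e' > 0" for e'
        using that by simp
      show "is_sol P {0..\<tau>} (\<lambda>t. phi t (w k) P)" for k by (rule solP)
      show "\<bar>phi t (w k) P\<bar> \<le> B" if "t \<in> {0..\<tau>}" for k t by (rule PsiBd[OF w that])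
      show "(\<lambda>k. phi 0 (w k) P) \<longlonglongrightarrow> v" using wv phi_props(2)[OF UP] by simp
      show "\<forall>t\<in>{0..\<tau>}. z t = phi t v P" if "is_sol P {0..\<tau>} z" "z 0 = v" for z
        by (rule uniqP[OF that])
      show "e > 0" by (rule e)
    qed
    then obtain N where N: "\<forall>k\<ge>N. \<forall>t\<in>{0..\<tau>}. \<bar>phi t (w k) P - phi t v P\<bar> < e" by blast
    have "\<tau> \<in> {0..\<tau>}" using tau by simp
    then have "\<forall>k\<ge>N. \<bar>TT (w k) - TT v\<bar> < e" using N unfolding TT_def by blast
    then show "\<exists>N. \<forall>k\<ge>N. norm (TT (w k) - TT v) < e" by auto
  qed
  have Bp: "\<exists>N. \<forall>k\<ge>N. \<forall>s\<in>{0..\<tau>}. \<bar>\<phi> (real (n k) * \<tau> + s) - phi s v P\<bar> < e"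
    if gr: "\<And>X. \<exists>K. \<forall>k\<ge>K. X \<le> real (n k) * \<tau>" and lim: "(\<lambda>k. \<phi> (real (n k) * \<tau>)) \<longlonglongrightarrow> v"
      and e: "e > 0" for n :: "nat \<Rightarrow> nat" and v e
  proof -
    have "\<exists>N. \<forall>k\<ge>N. \<forall>t\<in>{0..\<tau>}. \<bar>\<phi> (t + real (n k) * \<tau>) - phi t v P\<bar> < e"
    proof (rule CD0[where gk="\<lambda>k t x. f (t + real (n k) * \<tau>) x" and g=P
          and yk="\<lambda>k t. \<phi> (t + real (n k) * \<tau>)" and B=B and T=\<tau> and v=v])
      show "\<tau> > 0" by (rule tau)
      show "cont2 P" by (rule cP)
      show "\<exists>N. \<forall>k\<ge>N. \<forall>t\<in>{0..\<tau>}. \<forall>x\<in>{-B..B}. \<bar>f (t + real (n k) * \<tau>) x - P t x\<bar> < e'"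
        if e': "e' > 0" for e'
      proof -
        obtain T0 where T0: "\<forall>t\<ge>T0. \<forall>x\<in>{-B..B}. \<bar>R t x\<bar> < e'" using Rsmall[OF e'] by blast
        obtain K where K: "\<forall>k\<ge>K. T0 \<le> real (n k) * \<tau>" using gr by blast
        show ?thesis
        proof (intro exI[of _ K] allI impI ballI)
          fix k t x assume k: "K \<le> k" and t: "t \<in> {0..\<tau>}" and x: "x \<in> {-B..B}"
          have "T0 \<le> real (n k) * \<tau>" using K k by blast
          then have "t + real (n k) * \<tau> \<ge> T0" using t by auto
          then have "\<bar>R (t + real (n k) * \<tau>) x\<bar> < e'" using T0 x by blast
          then show "\<bar>f (t + real (n k) * \<tau>) x - P t x\<bar> < e'" using fshift[of t "n k" x] by simp
        qed
      qed
      show "is_sol (\<lambda>t x. f (t + real (n k) * \<tau>) x) {0..\<tau>} (\<lambda>t. \<phi> (t + real (n k) * \<tau>))" for k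
        unfolding is_sol_def
      proof
        fix t assume t: "t \<in> {0..\<tau>}"
        define h where "h = real (n k) * \<tau>"
        have h0: "h \<ge> 0" unfolding h_def using tau by simp
        have "t + h \<in> {0..}" using t h0 by simp
        then have "(\<phi> has_real_derivative f (t + h) (\<phi> (t + h))) (at (t + h) within {0..})"
          using solf unfolding is_sol_def by blast
        then have d1: "(\<phi> has_real_derivative f (t + h) (\<phi> (t + h)))
            (at ((\<lambda>s. s + h) t) within (\<lambda>s. s + h) ` {0..\<tau>})"
          by (rule DERIV_subset) (use h0 in auto)
        have d2: "((\<lambda>s. s + h) has_real_derivative 1) (at t within {0..\<tau>})"
          using DERIV_add[OF DERIV_ident DERIV_const[of h]] by simp
        have "(\<phi> \<circ> (\<lambda>s. s + h) has_real_derivative f (t + h) (\<phi> (t + h)) * 1) (at t within {0..\<tau>})"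
          by (rule DERIV_image_chain[OF d1 d2])
        then show "((\<lambda>t. \<phi> (t + real (n k) * \<tau>)) has_real_derivative
            f (t + real (n k) * \<tau>) (\<phi> (t + real (n k) * \<tau>))) (at t within {0..\<tau>})"
          unfolding h_def by (simp add: o_def)
      qed
      show "\<bar>\<phi> (t + real (n k) * \<tau>)\<bar> \<le> B" if "t \<in> {0..\<tau>}" for k t
      proof (rule phiB)
        have "0 \<le> real (n k) * \<tau>" using tau by simp
        then show "0 \<le> t + real (n k) * \<tau>" using that by simp
      qed
      show "(\<lambda>k. \<phi> (0 + real (n k) * \<tau>)) \<longlonglongrightarrow> v" using lim by simp
      show "\<forall>t\<in>{0..\<tau>}. z t = phi t v P" if "is_sol P {0..\<tau>} z" "z 0 = v" for z
        by (rule uniqP[OF that])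
      show "e > 0" by (rule e)
    qed
    then show ?thesis by (simp add: add.commute)
  qed
  define a where "a n = \<phi> (real n * \<tau>)" for n
  have aM: "\<bar>a n\<bar> \<le> M" for n unfolding a_def using tau by (intro phiM) simp
  have aMM: "a n \<in> {-M..M}" for n using aM[of n] by (auto simp: abs_le_iff)
  have aSuc: "a (Suc m) = \<phi> (real m * \<tau> + \<tau>)" for m
    unfolding a_def by (simp add: algebra_simps)
  have i: "(\<lambda>n. a (Suc n) - TT (a n)) \<longlonglongrightarrow> 0"
  proof (rule ccontr)
    assume nt: "\<not> ?thesis"
    obtain \<epsilon> and r :: "nat \<Rightarrow> nat" where ep: "\<epsilon> > 0" and r: "strict_mono r"
      and big: "\<And>k. \<epsilon> \<le> \<bar>a (Suc (r k)) - TT (a (r k))\<bar>"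
      using not_tendsto_subseq[OF nt] by blast
    obtain l and r2 :: "nat \<Rightarrow> nat" where l: "l \<in> {-M..M}" and r2: "strict_mono r2"
      and lim0: "((\<lambda>k. a (r k)) \<circ> r2) \<longlonglongrightarrow> l"
      by (rule bw[of "\<lambda>k. a (r k)" M]) (use aM in auto)
    define nn where "nn k = r (r2 k)" for k
    have nnk: "k \<le> nn k" for k
      unfolding nn_def using seq_suble[OF r2, of k] seq_suble[OF r, of "r2 k"] by simp
    have grn: "\<exists>K. \<forall>k\<ge>K. X \<le> real (nn k) * \<tau>" for X
    proof (rule grow[of \<tau> 0])
      show "\<tau> > 0" by (rule tau)
      show "real k * \<tau> - 0 \<le> real (nn k) * \<tau>" for k using nnk[of k] tau by simp
    qed
    have lim1: "(\<lambda>k. \<phi> (real (nn k) * \<tau>)) \<longlonglongrightarrow> l" using lim0 unfolding nn_def a_def o_def .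
    have lim2: "(\<lambda>k. a (Suc (nn k))) \<longlonglongrightarrow> TT l"
    proof (rule LIMSEQ_I)
      fix e :: real assume e: "e > 0"
      obtain N where N: "\<forall>k\<ge>N. \<forall>s\<in>{0..\<tau>}. \<bar>\<phi> (real (nn k) * \<tau> + s) - phi s l P\<bar> < e"
        using Bp[OF grn lim1 e] by blast
      have "\<tau> \<in> {0..\<tau>}" using tau by simp
      then have "\<forall>k\<ge>N. \<bar>a (Suc (nn k)) - TT l\<bar> < e" using N unfolding aSuc TT_def by blast
      then show "\<exists>N. \<forall>k\<ge>N. norm (a (Suc (nn k)) - TT l) < e" by auto
    qed
    have lim3: "(\<lambda>k. TT (a (nn k))) \<longlonglongrightarrow> TT l"
      by (rule A[OF aMM]) (use lim0 in \<open>simp add: nn_def o_def\<close>)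
    have "(\<lambda>k. a (Suc (nn k)) - TT (a (nn k))) \<longlonglongrightarrow> TT l - TT l"
      by (rule tendsto_diff[OF lim2 lim3])
    then obtain N where "\<forall>k\<ge>N. norm (a (Suc (nn k)) - TT (a (nn k)) - (TT l - TT l)) < \<epsilon>"
      using LIMSEQ_D[OF _ ep] by blast
    then have "\<bar>a (Suc (nn N)) - TT (a (nn N))\<bar> < \<epsilon>" by auto
    then show False using big[of "r2 N"] unfolding nn_def by simp
  qed
  have ii: "(\<lambda>n. a (Suc n) - a n) \<longlonglongrightarrow> 0" by (rule po[OF monoTT aM i])
  show ?thesis
  proof (rule ccontr)
    assume nt: "\<not> ?thesis"
    obtain \<epsilon> where ep: "\<epsilon> > 0"
      and ne: "\<not> eventually (\<lambda>t. dist \<bar>phi (t + \<tau>) u0 f - phi t u0 f\<bar> 0 < \<epsilon>) at_top"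
      using nt unfolding tendsto_iff by blast
    have "\<exists>t\<ge>X. \<epsilon> \<le> \<bar>\<phi> (t + \<tau>) - \<phi> t\<bar>" for X
      using ne unfolding eventually_at_top_linorder \<phi>_def by (auto simp: not_less)
    then have "\<forall>k::nat. \<exists>t. real k \<le> t \<and> \<epsilon> \<le> \<bar>\<phi> (t + \<tau>) - \<phi> t\<bar>" by blast
    then obtain tt where tt: "\<And>k. real k \<le> tt k" and ttb: "\<And>k. \<epsilon> \<le> \<bar>\<phi> (tt k + \<tau>) - \<phi> (tt k)\<bar>"
      by metis
    define n where "n k = nat \<lfloor>tt k / \<tau>\<rfloor>" for k
    define s where "s k = tt k - real (n k) * \<tau>" for k
    have nfl: "real (n k) * \<tau> \<le> tt k \<and> tt k < real (n k) * \<tau> + \<tau>" for k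
    proof -
      define x where "x = tt k / \<tau>"
      have x0: "x \<ge> 0" unfolding x_def using tt[of k] tau by simp
      have rn: "real (n k) = of_int \<lfloor>x\<rfloor>" unfolding n_def x_def[symmetric] using x0 by simp
      have f1: "of_int \<lfloor>x\<rfloor> \<le> x" "x < of_int \<lfloor>x\<rfloor> + 1" by linarith+
      have xt: "x * \<tau> = tt k" unfolding x_def using tau by simp
      have "of_int \<lfloor>x\<rfloor> * \<tau> \<le> x * \<tau>" using f1(1) tau by (intro mult_right_mono) auto
      moreover have "x * \<tau> < (of_int \<lfloor>x\<rfloor> + 1) * \<tau>" using f1(2) tau by (intro mult_strict_right_mono) auto
      ultimately show ?thesis using rn xt by (simp add: algebra_simps)
    qed
    have sk: "s k \<in> {0..\<tau>}" for k using nfl[of k] unfolding s_def by auto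
    obtain l and r3 :: "nat \<Rightarrow> nat" where l: "l \<in> {-M..M}" and r3: "strict_mono r3"
      and lim0: "((\<lambda>k. a (n k)) \<circ> r3) \<longlonglongrightarrow> l"
      by (rule bw[of "\<lambda>k. a (n k)" M]) (use aM in auto)
    define n1 where "n1 k = n (r3 k)" for k
    define n2 where "n2 k = Suc (n1 k)" for k
    have low1: "real k * 1 - \<tau> \<le> real (n1 k) * \<tau>" for k
    proof -
      have "real k \<le> real (r3 k)" using seq_suble[OF r3, of k] by simp
      then show ?thesis using nfl[of "r3 k"] tt[of "r3 k"] unfolding n1_def by linarith
    qed
    have gr1: "\<exists>K. \<forall>k\<ge>K. X \<le> real (n1 k) * \<tau>" for X
      by (rule grow[of 1 \<tau>]) (use low1 in auto)
    have gr2: "\<exists>K. \<forall>k\<ge>K. X \<le> real (n2 k) * \<tau>" for X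
    proof (rule grow[of 1 \<tau>])
      show "real k * 1 - \<tau> \<le> real (n2 k) * \<tau>" for k
        using low1[of k] tau unfolding n2_def by (simp add: algebra_simps)
    qed simp
    have lim1: "(\<lambda>k. \<phi> (real (n1 k) * \<tau>)) \<longlonglongrightarrow> l" using lim0 unfolding n1_def a_def o_def .
    have dlim: "(\<lambda>k. a (Suc (n1 k)) - a (n1 k)) \<longlonglongrightarrow> 0"
    proof (rule LIMSEQ_I)
      fix e :: real assume e: "e > 0"
      obtain N0 where N0: "\<forall>j\<ge>N0. norm (a (Suc j) - a j - 0) < e" using LIMSEQ_D[OF ii e] by blast
      obtain K where K: "\<forall>k\<ge>K. real N0 * \<tau> \<le> real (n1 k) * \<tau>" using gr1 by blast
      have "\<forall>k\<ge>K. N0 \<le> n1 k"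
      proof (intro allI impI)
        fix k assume "K \<le> k"
        then have "real N0 * \<tau> \<le> real (n1 k) * \<tau>" using K by blast
        then have "real N0 \<le> real (n1 k)" using tau by simp
        then show "N0 \<le> n1 k" by simp
      qed
      then show "\<exists>K. \<forall>k\<ge>K. norm (a (Suc (n1 k)) - a (n1 k) - 0) < e" using N0 by auto
    qed
    have lim2: "(\<lambda>k. \<phi> (real (n2 k) * \<tau>)) \<longlonglongrightarrow> l"
    proof -
      have "(\<lambda>k. a (n1 k) + (a (Suc (n1 k)) - a (n1 k))) \<longlonglongrightarrow> l + 0"
        by (rule tendsto_add[OF _ dlim]) (use lim1 in \<open>simp add: a_def\<close>)
      then show ?thesis unfolding n2_def a_def by simp
    qed
    have e2: "\<epsilon> / 2 > 0" using ep by simp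
    obtain N1 where N1: "\<forall>k\<ge>N1. \<forall>s\<in>{0..\<tau>}. \<bar>\<phi> (real (n1 k) * \<tau> + s) - phi s l P\<bar> < \<epsilon> / 2"
      using Bp[OF gr1 lim1 e2] by blast
    obtain N2 where N2: "\<forall>k\<ge>N2. \<forall>s\<in>{0..\<tau>}. \<bar>\<phi> (real (n2 k) * \<tau> + s) - phi s l P\<bar> < \<epsilon> / 2"
      using Bp[OF gr2 lim2 e2] by blast
    define k where "k = max N1 N2"
    have c1: "\<bar>\<phi> (real (n1 k) * \<tau> + s (r3 k)) - phi (s (r3 k)) l P\<bar> < \<epsilon> / 2"
      using N1 sk[of "r3 k"] unfolding k_def by auto
    have c2: "\<bar>\<phi> (real (n2 k) * \<tau> + s (r3 k)) - phi (s (r3 k)) l P\<bar> < \<epsilon> / 2"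
      using N2 sk[of "r3 k"] unfolding k_def by auto
    have q1: "real (n1 k) * \<tau> + s (r3 k) = tt (r3 k)" unfolding s_def n1_def by simp
    have q2: "real (n2 k) * \<tau> + s (r3 k) = tt (r3 k) + \<tau>" unfolding s_def n1_def n2_def
      by (simp add: algebra_simps)
    have "\<bar>\<phi> (tt (r3 k) + \<tau>) - \<phi> (tt (r3 k))\<bar> < \<epsilon>" using c1 c2 unfolding q1 q2 by linarith
    then show False using ttb[of "r3 k"] by simp
  qed
qed


end
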